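(* Let $N\ge 1$ and let $\mathcal{P}$ be the set of $M:=N(N+1)/2$ pairs $(i,j)$ with $1\le i\le j\le N$. For $p\in\mathcal{P}$ let $g_p\in\mathbb{R}$, $K_p\in[0,1]$, $a_p:=g_p^2K_p(1-K_p)$, $Z:=\sum_p\sqrt{a_p}$, and assume $\sum_p a_p>0$. For a budget $B>0$ let $\mathrm{Var}_\star:=Z^2/B$ (the minimum of $\sum_p a_p/s_p$ subject to $\sum_p s_p\le B$, $s_p\ge0$) and $\mathrm{Var}_{\mathrm{unif}}:=\sum_p a_p/(B/M)$ (the value under the uniform allocation $s_p=B/M$). Then $$\rho:=\frac{\mathrm{Var}_\star}{\mathrm{Var}_{\mathrm{unif}}}=\frac{Z^2}{M\sum_p a_p}\le 1,$$ with equality if and only if all $a_p$ are equal. Moreover, suppose the $g_p$ are the kernel ridge regression gradients: $K\in\mathbb{R}^{N\times N}$ is symmetric positive semi-definite with entries $K_{ij}=K_p\in[0,1]$, $\lambda>0$, $y\in\mathbb{R}^N$, $\alpha=(K+\lambda I)^{-1}y$, $\beta=(K+\lambda I)^{-1}\alpha$, and $g_{ij}=-2\lambda^2(\beta_i\alpha_j+\beta_j\alpha_i)$. If $\alpha$ is supported on a set $S\subset\{1,\dots,N\}$ with $|S|=m$, then $g$ is supported on $\mathcal{P}_S:=\{(i,j)\in\mathcal{P}: i\in S\text{ or }j\in S\}$, which has cardinality $|\mathcal{P}_S|=m(2N-m+1)/2$, and therefore $$\rho\le\frac{|\mathcal{P}_S|}{M}=\frac{m(2N-m+1)}{N(N+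1)}\approx\frac{2m}{N+1}.$$
   Context: $\rho$ compares the optimal pair-level shot allocation with uniform allocation for the first-order variance $\sum_p a_p/s_p$ of a loss evaluated at Bernoulli-mean kernel estimates with $\mathrm{Var}[\hat K_p]=K_p(1-K_p)/s_p$. *)

theory Defs
  imports Complex_Main
begin

definition pairs :: "nat \<Rightarrow> (nat \<times> nat) set" where
  "pairs N = {(i,j). 1 \<le> i \<and> i \<le> j \<and> j \<le> N}"

definition Mnum :: "nat \<Rightarrow> real" where
  "Mnum N = real N * (real N + 1) / 2"

definition acoef :: "(nat \<times> nat \<Rightarrow> real) \<Rightarrow> (nat \<times> nat \<Rightarrow> real) \<Rightarrow> nat \<times> nat \<Rightarrow> real" where
  "acoef g Kp p = (g p)^2 * Kp p * (1 - Kp p)"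

definition Zsum :: "nat \<Rightarrow> (nat \<times> nat \<Rightarrow> real) \<Rightarrow> (nat \<times> nat \<Rightarrow> real) \<Rightarrow> real" where
  "Zsum N g Kp = (\<Sum>p\<in>pairs N. sqrt (acoef g Kp p))"

definition var_star :: "nat \<Rightarrow> (nat \<times> nat \<Rightarrow> real) \<Rightarrow> (nat \<times> nat \<Rightarrow> real) \<Rightarrow> real \<Rightarrow> real" where
  "var_star N g Kp B = (Zsum N g Kp)^2 / B"

definition var_unif :: "nat \<Rightarrow> (nat \<times> nat \<Rightarrow> real) \<Rightarrow> (nat \<times> nat \<Rightarrow> real) \<Rightarrow> real \<Rightarrow> real" where
  "var_unif N g Kp B = (\<Sum>p\<in>pairs N. acoef g Kp p / (B / Mnum N))"

definition rho :: "nat \<Rightarrow> (nat \<times> nat \<Rightarrow> real) \<Rightarrow> (nat \<times> nat \<Rightarrow> real) \<Rightarrow> real \<Rightarrow> real" where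
  "rho N g Kp B = var_star N g Kp B / var_unif N g Kp B"

definition pairs_S :: "nat \<Rightarrow> nat set \<Rightarrow> (nat \<times> nat) set" where
  "pairs_S N S = {(i,j) \<in> pairs N. i \<in> S \<or> j \<in> S}"

definition reg_apply :: "nat \<Rightarrow> (nat \<Rightarrow> nat \<Rightarrow> real) \<Rightarrow> real \<Rightarrow> (nat \<Rightarrow> real) \<Rightarrow> nat \<Rightarrow> real" where
  "reg_apply N K lam x i = (\<Sum>j\<in>{1..N}. (K i j + (if i = j then lam else 0)) * x j)"

definition psd_sym :: "nat \<Rightarrow> (nat \<Rightarrow> nat \<Rightarrow> real) \<Rightarrow> bool" where
  "psd_sym N K \<longleftrightarrow> (\<forall>i\<in>{1..N}. \<forall>j\<in>{1..N}. K i j = K j i) \<and>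
     (\<forall>x :: nat \<Rightarrow> real. (\<Sum>i\<in>{1..N}. \<Sum>j\<in>{1..N}. x i * K i j * x j) \<ge> 0)"

end

theory Submission
  imports Defs
begin

lemma tri_card:
  assumes "finite (A::nat set)"
  shows "2 * card {(i,j). i\<in>A \<and> j\<in>A \<and> i \<le> j} = card A * (card A + 1)"
proof -
  define L where "L = {(i,j). i\<in>A \<and> j\<in>A \<and> i \<le> j}"
  define U where "U = {(i,j). i\<in>A \<and> j\<in>A \<and> j \<le> i}"
  have fL: "finite L" unfolding L_def
    by (rule finite_subset[of _ "A \<times> A"]) (auto simp: assms)
  have fU: "finite U" unfolding U_def
    by (rule finite_subset[of _ "A \<times> A"]) (auto simp: assms)
  have LU: "L \<union> U = A \<times> A" unfolding L_def U_def by auto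
  have LI: "L \<inter> U = (\<lambda>i. (i,i)) ` A" unfolding L_def U_def by auto
  have "U = prod.swap ` L" unfolding L_def U_def by auto
  then have cU: "card U = card L" by (simp add: card_image)
  have cI: "card (L \<inter> U) = card A" unfolding LI by (simp add: card_image inj_on_def)
  have "card L + card U = card (L \<union> U) + card (L \<inter> U)"
    using card_Un_Int[OF fL fU] by simp
  then have "2 * card L = card A * card A + card A" using cU cI LU by (simp add: card_cartesian_product)
  then show ?thesis unfolding L_def by (simp add: algebra_simps)
qed

lemma pairs_alt: "pairs N = {(i,j). i\<in>{1..N} \<and> j\<in>{1..N} \<and> i \<le> j}"
  unfolding pairs_def by auto

lemma finite_pairs: "finite (pairs N)"
  by (rule finite_subset[of _ "{1..N} \<times> {1..N}"]) (auto simp: pairs_def)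

lemma card_pairs: "real (card (pairs N)) = Mnum N"
proof -
  have "2 * card (pairs N) = N * (N + 1)" unfolding pairs_alt using tri_card[of "{1..N}"] by simp
  then have "2 * real (card (pairs N)) = real N * (real N + 1)"
    by (metis of_nat_1 of_nat_add of_nat_mult of_nat_numeral)
  then show ?thesis unfolding Mnum_def by simp
qed

lemma cs_identity:
  fixes x :: "'a \<Rightarrow> real"
  assumes "finite P"
  shows "(\<Sum>p\<in>P. \<Sum>q\<in>P. (x p - x q)^2) = 2 * (real (card P) * (\<Sum>p\<in>P. (x p)^2) - (\<Sum>p\<in>P. x p)^2)"
proof -
  have e: "(x p - x q)^2 = (x p)^2 + ((x q)^2 - 2 * (x p * x q))" for p q
    by (simp add: power2_eq_square algebra_simps)
  have "(\<Sum>p\<in>P. \<Sum>q\<in>P. (x p - x q)^2) =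
     (\<Sum>p\<in>P. \<Sum>q\<in>P. (x p)^2) + ((\<Sum>p\<in>P. \<Sum>q\<in>P. (x q)^2) - 2 * (\<Sum>p\<in>P. \<Sum>q\<in>P. x p * x q))"
    unfolding e by (simp only: sum.distrib sum_subtractf sum_distrib_left)
  also have "(\<Sum>p\<in>P. \<Sum>q\<in>P. (x p)^2) = real (card P) * (\<Sum>p\<in>P. (x p)^2)"
    by (simp add: sum_distrib_left)
  also have "(\<Sum>p\<in>P. \<Sum>q\<in>P. (x q)^2) = real (card P) * (\<Sum>p\<in>P. (x p)^2)"
    by simp
  also have "(\<Sum>p\<in>P. \<Sum>q\<in>P. x p * x q) = (\<Sum>p\<in>P. x p)^2"
    by (simp add: power2_eq_square sum_product)
  finally show ?thesis by simp
qed

lemma cs_le: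
  fixes x :: "'a \<Rightarrow> real"
  assumes "finite P"
  shows "(\<Sum>p\<in>P. x p)^2 \<le> real (card P) * (\<Sum>p\<in>P. (x p)^2)"
proof -
  have "0 \<le> (\<Sum>p\<in>P. \<Sum>q\<in>P. (x p - x q)^2)" by (intro sum_nonneg) auto
  then show ?thesis using cs_identity[OF assms, of x] by simp
qed

lemma cs_eq:
  fixes x :: "'a \<Rightarrow> real"
  assumes "finite P"
  shows "(\<Sum>p\<in>P. x p)^2 = real (card P) * (\<Sum>p\<in>P. (x p)^2) \<longleftrightarrow> (\<forall>p\<in>P. \<forall>q\<in>P. x p = x q)"
proof -
  have "(\<Sum>p\<in>P. x p)^2 = real (card P) * (\<Sum>p\<in>P. (x p)^2) \<longleftrightarrow> (\<Sum>p\<in>P. \<Sum>q\<in>P. (x p - x q)^2) = 0"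
    using cs_identity[OF assms, of x] by auto
  also have "\<dots> \<longleftrightarrow> (\<forall>p\<in>P. (\<Sum>q\<in>P. (x p - x q)^2) = 0)"
    using assms by (intro sum_nonneg_eq_0_iff) (auto intro: sum_nonneg)
  also have "\<dots> \<longleftrightarrow> (\<forall>p\<in>P. \<forall>q\<in>P. (x p - x q)^2 = 0)"
    using assms by (simp add: sum_nonneg_eq_0_iff)
  finally show ?thesis by simp
qed

lemma acoef_nonneg: "0 \<le> Kp p \<Longrightarrow> Kp p \<le> 1 \<Longrightarrow> 0 \<le> acoef g Kp p"
  unfolding acoef_def by simp

lemma rho_formula:
  assumes "(\<Sum>p\<in>pairs N. acoef g Kp p) > 0" "B > 0" "N \<ge> 1"
  shows "rho N g Kp B = (Zsum N g Kp)^2 / (Mnum N * (\<Sum>p\<in>pairs N. acoef g Kp p))"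
proof -
  have M: "Mnum N > 0" using assms(3) unfolding Mnum_def by simp
  have "var_unif N g Kp B = (\<Sum>p\<in>pairs N. acoef g Kp p) * Mnum N / B"
    unfolding var_unif_def by (simp add: sum_divide_distrib[symmetric] sum_distrib_right)
  then show ?thesis unfolding rho_def var_star_def using M assms by (simp add: field_simps)
qed

lemma part1:
  assumes "N \<ge> 1" "\<forall>p\<in>pairs N. 0 \<le> Kp p \<and> Kp p \<le> 1"
    "(\<Sum>p\<in>pairs N. acoef g Kp p) > 0" "B > 0"
  shows "rho N g Kp B = (Zsum N g Kp)^2 / (Mnum N * (\<Sum>p\<in>pairs N. acoef g Kp p)) \<and>
         rho N g Kp B \<le> 1 \<and>
         (rho N g Kp B = 1 \<longleftrightarrow> (\<forall>p\<in>pairs N. \<forall>q\<in>pairs N. acoef g Kp p = acoef g Kp q))"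
proof -
  let ?A = "\<Sum>p\<in>pairs N. acoef g Kp p"
  have M: "Mnum N > 0" using assms(1) unfolding Mnum_def by simp
  have sq: "(\<Sum>p\<in>pairs N. (sqrt (acoef g Kp p))^2) = ?A"
    using assms(2) by (intro sum.cong) (auto intro: acoef_nonneg)
  have D: "Mnum N * ?A > 0" using M assms(3) by simp
  have le: "(Zsum N g Kp)^2 \<le> Mnum N * ?A"
    using cs_le[OF finite_pairs, of "\<lambda>p. sqrt (acoef g Kp p)" N] sq card_pairs
    unfolding Zsum_def by simp
  have eq: "(Zsum N g Kp)^2 = Mnum N * ?A \<longleftrightarrow> (\<forall>p\<in>pairs N. \<forall>q\<in>pairs N. acoef g Kp p = acoef g Kp q)"
  proof -
    have "(Zsum N g Kp)^2 = Mnum N * ?A \<longleftrightarrow> (\<forall>p\<in>pairs N. \<forall>q\<in>pairs N. sqrt (acoef g Kp p) = sqrt (acoef g Kp q))"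
      using cs_eq[OF finite_pairs, of "\<lambda>p. sqrt (acoef g Kp p)" N] sq card_pairs
      unfolding Zsum_def by simp
    then show ?thesis by simp
  qed
  have R: "rho N g Kp B = (Zsum N g Kp)^2 / (Mnum N * ?A)"
    using rho_formula assms by blast
  have "rho N g Kp B \<le> 1" using R le D by (simp add: divide_le_eq_1)
  moreover have "rho N g Kp B = 1 \<longleftrightarrow> (Zsum N g Kp)^2 = Mnum N * ?A"
    using R D by (auto simp: divide_eq_1_iff)
  ultimately show ?thesis using R eq by blast
qed


theorem theorem1:
  fixes N :: nat
  assumes "N \<ge> 1"
  shows
   "(\<forall>(g :: nat \<times> nat \<Rightarrow> real) (Kp :: nat \<times> nat \<Rightarrow> real) (B :: real).
       (\<forall>p\<in>pairs N. 0 \<le> Kp p \<and> Kp p \<le> 1) \<and>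
       (\<Sum>p\<in>pairs N. acoef g Kp p) > 0 \<and> B > 0 \<longrightarrow>
         rho N g Kp B = (Zsum N g Kp)^2 / (Mnum N * (\<Sum>p\<in>pairs N. acoef g Kp p)) \<and>
         rho N g Kp B \<le> 1 \<and>
         (rho N g Kp B = 1 \<longleftrightarrow> (\<forall>p\<in>pairs N. \<forall>q\<in>pairs N. acoef g Kp p = acoef g Kp q)))
    \<and>
    (\<forall>(K :: nat \<Rightarrow> nat \<Rightarrow> real) (lam :: real) (y :: nat \<Rightarrow> real)
       (\<alpha> :: nat \<Rightarrow> real) (\<beta> :: nat \<Rightarrow> real) (g :: nat \<times> nat \<Rightarrow> real)
       (S :: nat set) (m :: nat) (B :: real).
       psd_sym N K \<and>
       (\<forall>i\<in>{1..N}. \<forall>j\<in>{1..N}. 0 \<le> K i j \<and> K i j \<le> 1) \<and>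
       lam > 0 \<and>
       (\<forall>i\<in>{1..N}. reg_apply N K lam \<alpha> i = y i) \<and>
       (\<forall>i\<in>{1..N}. reg_apply N K lam \<beta> i = \<alpha> i) \<and>
       (\<forall>i j. g (i, j) = - 2 * lam^2 * (\<beta> i * \<alpha> j + \<beta> j * \<alpha> i)) \<and>
       S \<subseteq> {1..N} \<and> card S = m \<and>
       (\<forall>i\<in>{1..N} - S. \<alpha> i = 0) \<and>
       (\<Sum>p\<in>pairs N. acoef g (\<lambda>(i, j). K i j) p) > 0 \<and> B > 0 \<longrightarrow>
         (\<forall>p\<in>pairs N - pairs_S N S. g p = 0) \<and>
         real (card (pairs_S N S)) = real m * (2 * real N - real m + 1) / 2 \<and>
         rho N g (\<lambda>(i, j). K i j) B \<le> real (card (pairs_S N S)) / Mnum N \<and>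
         real (card (pairs_S N S)) / Mnum N = real m * (2 * real N - real m + 1) / (real N * (real N + 1)))"
proof (rule conjI; intro allI impI)
  fix g :: "nat \<times> nat \<Rightarrow> real" and Kp :: "nat \<times> nat \<Rightarrow> real" and B :: real
  assume "(\<forall>p\<in>pairs N. 0 \<le> Kp p \<and> Kp p \<le> 1) \<and> (\<Sum>p\<in>pairs N. acoef g Kp p) > 0 \<and> B > 0"
  then show "rho N g Kp B = (Zsum N g Kp)^2 / (Mnum N * (\<Sum>p\<in>pairs N. acoef g Kp p)) \<and>
         rho N g Kp B \<le> 1 \<and>
         (rho N g Kp B = 1 \<longleftrightarrow> (\<forall>p\<in>pairs N. \<forall>q\<in>pairs N. acoef g Kp p = acoef g Kp q))"
    using part1[OF assms] by blast
next
  fix K :: "nat \<Rightarrow> nat \<Rightarrow> real" and lam :: real and y \<alpha> \<beta> :: "nat \<Rightarrow> real"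
    and g :: "nat \<times> nat \<Rightarrow> real" and S :: "nat set" and m :: nat and B :: real
  assume H: "psd_sym N K \<and>
       (\<forall>i\<in>{1..N}. \<forall>j\<in>{1..N}. 0 \<le> K i j \<and> K i j \<le> 1) \<and>
       lam > 0 \<and>
       (\<forall>i\<in>{1..N}. reg_apply N K lam \<alpha> i = y i) \<and>
       (\<forall>i\<in>{1..N}. reg_apply N K lam \<beta> i = \<alpha> i) \<and>
       (\<forall>i j. g (i, j) = - 2 * lam^2 * (\<beta> i * \<alpha> j + \<beta> j * \<alpha> i)) \<and>
       S \<subseteq> {1..N} \<and> card S = m \<and>
       (\<forall>i\<in>{1..N} - S. \<alpha> i = 0) \<and>
       (\<Sum>p\<in>pairs N. acoef g (\<lambda>(i, j). K i j) p) > 0 \<and> B > 0"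
  define Kp where "Kp = (\<lambda>(i::nat, j::nat). K i j)"
  define T where "T = {1..N} - S"
  have Kb: "\<forall>i\<in>{1..N}. \<forall>j\<in>{1..N}. 0 \<le> K i j \<and> K i j \<le> 1" using H by blast
  have gdef: "\<forall>i j. g (i, j) = - 2 * lam^2 * (\<beta> i * \<alpha> j + \<beta> j * \<alpha> i)" using H by blast
  have SN: "S \<subseteq> {1..N}" and cS: "card S = m" and al: "\<forall>i\<in>{1..N} - S. \<alpha> i = 0"
    using H by blast+
  have Apos: "(\<Sum>p\<in>pairs N. acoef g Kp p) > 0" and Bpos: "B > 0" using H unfolding Kp_def by blast+
  have Kpb: "\<forall>p\<in>pairs N. 0 \<le> Kp p \<and> Kp p \<le> 1" using Kb unfolding Kp_def pairs_def by auto
  have diff: "pairs N - pairs_S N S = {(i,j). i\<in>T \<and> j\<in>T \<and> i \<le> j}"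
    unfolding T_def pairs_S_def pairs_def by auto
  have gz: "\<forall>p\<in>pairs N - pairs_S N S. g p = 0"
  proof
    fix p assume "p \<in> pairs N - pairs_S N S"
    then obtain i j where p: "p = (i,j)" "i \<in> T" "j \<in> T" unfolding diff by auto
    then show "g p = 0" using gdef al unfolding T_def by simp
  qed
  have sub: "pairs_S N S \<subseteq> pairs N" unfolding pairs_S_def by auto
  have fS: "finite (pairs_S N S)" using finite_subset[OF sub finite_pairs] .
  have cT: "card T = N - m" unfolding T_def using SN cS by (simp add: card_Diff_subset finite_subset)
  have mN: "m \<le> N" using SN cS card_mono[of "{1..N}" S] by simp
  have cdiff: "2 * card (pairs N - pairs_S N S) = (N - m) * (N - m + 1)"
    unfolding diff using tri_card[of T] cT unfolding T_def by simp
  have cdiff': "2 * real (card (pairs N - pairs_S N S)) = (real N - real m) * (real N - real m + 1)"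
  proof -
    have "real (2 * card (pairs N - pairs_S N S)) = real ((N - m) * (N - m + 1))" using cdiff by simp
    also have "\<dots> = real (N - m) * (real (N - m) + 1)" by (simp only: of_nat_mult of_nat_add of_nat_1)
    also have "real (N - m) = real N - real m" using mN by (simp add: of_nat_diff)
    finally show ?thesis by simp
  qed
  have csum: "card (pairs N) = card (pairs_S N S) + card (pairs N - pairs_S N S)"
    using card_Diff_subset[OF fS sub] card_mono[OF finite_pairs sub] by simp
  have Mv: "Mnum N = real N * (real N + 1) / 2" unfolding Mnum_def ..
  have cPS: "real (card (pairs_S N S)) = Mnum N - real (card (pairs N - pairs_S N S))"
    using csum card_pairs[of N] by simp
  have cP: "real (card (pairs_S N S)) = real m * (2 * real N - real m + 1) / 2"
    using cPS cdiff' Mv by (simp add: field_simps)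
  have M: "Mnum N > 0" using assms unfolding Mnum_def by simp
  have c4: "real (card (pairs_S N S)) / Mnum N = real m * (2 * real N - real m + 1) / (real N * (real N + 1))"
  proof -
    have "real N * (real N + 1) > 0" using assms by simp
    then show ?thesis unfolding cP Mv by (simp add: divide_simps)
  qed
  let ?A = "\<Sum>p\<in>pairs N. acoef g Kp p"
  have azero: "\<forall>p\<in>pairs N - pairs_S N S. acoef g Kp p = 0" using gz unfolding acoef_def by simp
  have A_S: "?A = (\<Sum>p\<in>pairs_S N S. acoef g Kp p)"
    using azero sub by (intro sum.mono_neutral_right[OF finite_pairs]) auto
  have Z_S: "Zsum N g Kp = (\<Sum>p\<in>pairs_S N S. sqrt (acoef g Kp p))"
    unfolding Zsum_def using azero sub by (intro sum.mono_neutral_right[OF finite_pairs]) auto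
  have sq: "(\<Sum>p\<in>pairs_S N S. (sqrt (acoef g Kp p))^2) = ?A"
    unfolding A_S using Kpb sub by (intro sum.cong) (auto intro: acoef_nonneg)
  have le: "(Zsum N g Kp)^2 \<le> real (card (pairs_S N S)) * ?A"
    using cs_le[OF fS, of "\<lambda>p. sqrt (acoef g Kp p)"] sq Z_S by simp
  have R: "rho N g Kp B = (Zsum N g Kp)^2 / (Mnum N * ?A)"
    using rho_formula[OF Apos Bpos assms] .
  have "rho N g Kp B \<le> real (card (pairs_S N S)) / Mnum N"
    unfolding R using le M Apos by (simp add: divide_le_eq field_simps)
  then have "rho N g (\<lambda>(i, j). K i j) B \<le> real (card (pairs_S N S)) / Mnum N"
    unfolding Kp_def .
  then show "(\<forall>p\<in>pairs N - pairs_S N S. g p = 0) \<and>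
         real (card (pairs_S N S)) = real m * (2 * real N - real m + 1) / 2 \<and>
         rho N g (\<lambda>(i, j). K i j) B \<le> real (card (pairs_S N S)) / Mnum N \<and>
         real (card (pairs_S N S)) / Mnum N = real m * (2 * real N - real m + 1) / (real N * (real N + 1))"
    using gz cP c4 by blast
qed

end
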